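(* Let $G$ be a non-complete double-critical $k$-chromatic graph. If $H$ is a connected subgraph of $G$ with at least $2$ vertices, then the graph $G/V(H)$ obtained from $G$ by contracting $V(H)$ into a single vertex is $(k-1)$-colourable.
   Context: All graphs are finite and simple. A graph $G$ is (vertex-)critical if $\chi(G-v)<\chi(G)$ for every vertex $v\in V(G)$. A critical graph $G$ is double-critical if $\chi(G-x-y)\le\chi(G)-2$ for every edge $xy\in E(G)$. For $U\subseteq V(G)$ with $G[U]$ connected, $G/U$ denotes the graph obtained from $G$ by contracting $U$ into one vertex (resulting in a simple graph). *)

theory Defs
  imports Main
begin

definition simple_graph :: "'a set \<Rightarrow> ('a \<Rightarrow> 'a \<Rightarrow> bool) \<Rightarrow> bool" where
  "simple_graph V E \<longleftrightarrow> finite V \<and>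
     (\<forall>x y. E x y \<longrightarrow> x \<in> V \<and> y \<in> V \<and> x \<noteq> y \<and> E y x)"

definition colourable :: "'a set \<Rightarrow> ('a \<Rightarrow> 'a \<Rightarrow> bool) \<Rightarrow> nat \<Rightarrow> bool" where
  "colourable V E k \<longleftrightarrow>
     (\<exists>f :: 'a \<Rightarrow> nat. (\<forall>x\<in>V. f x < k) \<and> (\<forall>x\<in>V. \<forall>y\<in>V. E x y \<longrightarrow> f x \<noteq> f y))"

definition chromatic :: "'a set \<Rightarrow> ('a \<Rightarrow> 'a \<Rightarrow> bool) \<Rightarrow> nat" where
  "chromatic V E = (LEAST k. colourable V E k)"

text \<open>G - v and G - x - y are the induced subgraphs on V - {v}, V - {x,y}.\<close>
definition critical :: "'a set \<Rightarrow> ('a \<Rightarrow> 'a \<Rightarrow> bool) \<Rightarrow> bool" where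
  "critical V E \<longleftrightarrow> (\<forall>v\<in>V. chromatic (V - {v}) E < chromatic V E)"

definition double_critical :: "'a set \<Rightarrow> ('a \<Rightarrow> 'a \<Rightarrow> bool) \<Rightarrow> bool" where
  "double_critical V E \<longleftrightarrow> critical V E \<and>
     (\<forall>x\<in>V. \<forall>y\<in>V. E x y \<longrightarrow> chromatic (V - {x, y}) E + 2 \<le> chromatic V E)"

definition complete_graph :: "'a set \<Rightarrow> ('a \<Rightarrow> 'a \<Rightarrow> bool) \<Rightarrow> bool" where
  "complete_graph V E \<longleftrightarrow> (\<forall>x\<in>V. \<forall>y\<in>V. x \<noteq> y \<longrightarrow> E x y)"

definition subgraph :: "'a set \<Rightarrow> ('a \<Rightarrow> 'a \<Rightarrow> bool) \<Rightarrow> 'a set \<Rightarrow> ('a \<Rightarrow> 'a \<Rightarrow> bool) \<Rightarrow> bool" where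
  "subgraph VH EH V E \<longleftrightarrow> simple_graph VH EH \<and> VH \<subseteq> V \<and> (\<forall>x y. EH x y \<longrightarrow> E x y)"

definition connected_graph :: "'a set \<Rightarrow> ('a \<Rightarrow> 'a \<Rightarrow> bool) \<Rightarrow> bool" where
  "connected_graph V E \<longleftrightarrow>
     (\<forall>x\<in>V. \<forall>y\<in>V. (\<lambda>a b. E a b \<and> a \<in> V \<and> b \<in> V)\<^sup>*\<^sup>* x y)"

text \<open>Contraction G/U: vertices outside U are kept as Some v, U becomes the
  single new vertex None; the result is simple (no loops, no multi-edges).\<close>
definition contract_V :: "'a set \<Rightarrow> 'a set \<Rightarrow> 'a option set" where
  "contract_V V U = insert None (Some ` (V - U))"

definition contract_E :: "('a \<Rightarrow> 'a \<Rightarrow> bool) \<Rightarrow> 'a set \<Rightarrow> 'a option \<Rightarrow> 'a option \<Rightarrow> bool" where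
  "contract_E E U a b =
     (case (a, b) of
        (Some x, Some y) \<Rightarrow> x \<notin> U \<and> y \<notin> U \<and> E x y
      | (None, Some y) \<Rightarrow> y \<notin> U \<and> (\<exists>u\<in>U. E u y)
      | (Some x, None) \<Rightarrow> x \<notin> U \<and> (\<exists>u\<in>U. E x u)
      | (None, None) \<Rightarrow> False)"

end

theory Submission
  imports Defs
begin

lemma colourable_exists:
  assumes "simple_graph V E" shows "\<exists>n. colourable W E n"
proof -
  have "finite (W \<inter> V)" using assms unfolding simple_graph_def by auto
  then obtain f :: "_ \<Rightarrow> nat" and n :: nat where f: "f ` (W \<inter> V) = {i. i<n}" "inj_on f (W \<inter> V)"
    using finite_imp_inj_to_nat_seg by blast
  have "colourable W E (n+1)"
    unfolding colourable_def
  proof (intro exI[of _ "\<lambda>x. if x \<in> V then f x else n"] conjI ballI impI)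
    fix x assume "x \<in> W" then show "(if x \<in> V then f x else n) < n+1"
    proof (cases "x \<in> V")
      case True
      then have "f x \<in> f ` (W \<inter> V)" using \<open>x \<in> W\<close> by blast
      then show ?thesis using f(1) True by auto
    qed simp
  next
    fix x y assume "x \<in> W" "y \<in> W" "E x y"
    then have "x \<in> V" "y \<in> V" "x \<noteq> y" using assms unfolding simple_graph_def by auto
    then show "(if x \<in> V then f x else n) \<noteq> (if y \<in> V then f y else n)"
      using f(2) \<open>x \<in> W\<close> \<open>y \<in> W\<close> unfolding inj_on_def by auto
  qed
  then show ?thesis by blast
qed

theorem proposition3:
  fixes V :: "'a set" and E :: "'a \<Rightarrow> 'a \<Rightarrow> bool" and k :: nat
    and VH :: "'a set" and EH :: "'a \<Rightarrow> 'a \<Rightarrow> bool"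
  assumes "simple_graph V E"
    and "\<not> complete_graph V E"
    and "double_critical V E"
    and "chromatic V E = k"
    and "subgraph VH EH V E"
    and "connected_graph VH EH"
    and "card VH \<ge> 2"
  shows "colourable (contract_V V VH) (contract_E E VH) (k - 1)"
proof -
  obtain a b where ab: "a \<in> VH" "b \<in> VH" "a \<noteq> b"
    proof -
    have "\<not> card VH \<le> 1" using assms(7) by simp
    have fin: "finite VH" using assms(7) card.infinite by fastforce
    have "\<not> (\<forall>x\<in>VH. \<forall>y\<in>VH. x = y)" using card_le_Suc0_iff_eq[OF fin] \<open>\<not> card VH \<le> 1\<close>
      by simp
    then show ?thesis using that by blast
  qed
  let ?R = "\<lambda>a b. EH a b \<and> a \<in> VH \<and> b \<in> VH"
  have "?R\<^sup>*\<^sup>* a b" using assms(6) ab unfolding connected_graph_def by (simp only: Ball_def)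
  then obtain c where "?R a c"
  proof (cases rule: converse_rtranclpE)
    case base then show ?thesis using ab(3) by simp
  next
    case (step c) then show ?thesis using that by blast
  qed
  then have ac: "E a c" "a \<in> VH" "c \<in> VH" using assms(5) unfolding subgraph_def by auto
  have "a \<in> V" "c \<in> V" using ac assms(5) unfolding subgraph_def by auto
  then have ch: "chromatic (V - {a, c}) E + 2 \<le> k"
    using assms(3,4) ac \<open>a \<in> V\<close> \<open>c \<in> V\<close> unfolding double_critical_def by simp
  obtain n where "colourable (V - {a,c}) E n" using colourable_exists[OF assms(1)] by blast
  then have "colourable (V - {a,c}) E (chromatic (V - {a, c}) E)"
    unfolding chromatic_def by (rule LeastI)
  then obtain f where f: "\<forall>x\<in>V - {a,c}. f x < chromatic (V - {a, c}) E"
      "\<forall>x\<in>V - {a,c}. \<forall>y\<in>V - {a,c}. E x y \<longrightarrow> f x \<noteq> f y"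
    unfolding colourable_def by blast
  have f1: "\<forall>x\<in>V - VH. f x < k - 2"
  proof
    fix x assume "x \<in> V - VH"
    then have "x \<in> V - {a,c}" using ac by auto
    then have "f x < chromatic (V - {a, c}) E" using f(1) by blast
    then show "f x < k - 2" using ch by linarith
  qed
  have f2: "\<forall>x\<in>V - VH. \<forall>y\<in>V - VH. E x y \<longrightarrow> f x \<noteq> f y" using f(2) ac by auto
  have f3: "\<forall>x\<in>V - VH. f x < k - 1"
  proof
    fix x assume "x \<in> V - VH"
    then have "f x < k - 2" using f1 by blast
    then show "f x < k - 1" by linarith
  qed
  have k2: "k - 2 < k - 1" using ch by linarith
  define g where "g = (\<lambda>v. case v of None \<Rightarrow> k - 2 | Some x \<Rightarrow> f x)"
  show ?thesis unfolding colourable_def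
  proof (intro exI[of _ g] conjI ballI impI)
    fix x assume "x \<in> contract_V V VH"
    then show "g x < k - 1" using f3 k2 unfolding contract_V_def g_def by auto
  next
    fix x y assume "x \<in> contract_V V VH" "y \<in> contract_V V VH" "contract_E E VH x y"
    show "g x \<noteq> g y"
    proof (cases x)
      case None
      then obtain y' where y: "y = Some y'" "y' \<notin> VH"
        using \<open>contract_E E VH x y\<close> unfolding contract_E_def
        by (cases y) auto
      then have "y' \<in> V - VH" using \<open>y \<in> contract_V V VH\<close> unfolding contract_V_def by auto
      then have "f y' < k - 2" using f1 by blast
      then show ?thesis using None y unfolding g_def by simp
    next
      case (Some x')
      show ?thesis
      proof (cases y)
        case None
        then have "x' \<notin> VH"
          using \<open>contract_E E VH x y\<close> Some unfolding contract_E_def by simp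
        then have "x' \<in> V - VH" using \<open>x \<in> contract_V V VH\<close> Some unfolding contract_V_def by auto
        then have "f x' < k - 2" using f1 by blast
        then show ?thesis using None Some unfolding g_def by simp
      next
        case (Some y')
        have e: "E x' y'" "x' \<notin> VH" "y' \<notin> VH"
          using \<open>contract_E E VH x y\<close> Some \<open>x = Some x'\<close> unfolding contract_E_def by auto
        have "x' \<in> V - VH" "y' \<in> V - VH"
          using \<open>x \<in> contract_V V VH\<close> \<open>y \<in> contract_V V VH\<close> Some \<open>x = Some x'\<close>
          unfolding contract_V_def by auto
        then have "f x' \<noteq> f y'" using f2 e by blast
        then show ?thesis using Some \<open>x = Some x'\<close> unfolding g_def by simp
      qed
    qed
  qed
qed

end
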